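(* Let $X,Y\in\mathbb R^p$ be jointly multivariate Normal with mean zero, $\operatorname{Var}(X)=x\,I_p$, $\operatorname{Var}(Y)=y\,I_p$, $\operatorname{Cov}(X,Y)=z\,I_p$, where $x,y>0$. Then \[\mathrm E\big[Y^{\arg\max_k X^k}\big]=\frac{z}{x}\,\mathrm E[X^{(1)}]=\frac{z}{\sqrt x}\,\mathrm E\big[\mathcal N(\mathbf 0,I_p)^{(1)}\big]=\frac{z}{\sqrt{xy}}\,\mathrm E[Y^{(1)}].\]
   Context: For a vector $v$, $v^k$ is its $k$-th coordinate and $v^{(1)}=\max_k v^k$ its largest coordinate; $\mathcal N(\mathbf 0,I_p)^{(1)}$ denotes the maximum coordinate of a standard Normal vector in $\mathbb R^p$. *)

theory Defs
  imports "HOL-Probability.Probability"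
begin

definition normal_law :: "real \<Rightarrow> real \<Rightarrow> real measure" where
  "normal_law m v = (if v = 0 then return borel m
                     else density lborel (normal_density m (sqrt v)))"

text \<open>(X,Y) jointly Gaussian in R^p x R^p, mean zero, Var X = x I, Var Y = y I, Cov(X,Y) = z I:
  every linear combination a.X + b.Y is centred normal with the induced variance.\<close>
definition jointly_normal_cov ::
  "'s measure \<Rightarrow> ('s \<Rightarrow> real^'p) \<Rightarrow> ('s \<Rightarrow> real^'p) \<Rightarrow> real \<Rightarrow> real \<Rightarrow> real \<Rightarrow> bool" where
  "jointly_normal_cov M X Y x y z \<longleftrightarrow>
     X \<in> borel_measurable M \<and> Y \<in> borel_measurable M \<and>
     (\<forall>a b. distr M borel (\<lambda>\<omega>. a \<bullet> X \<omega> + b \<bullet> Y \<omega>)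
            = normal_law 0 (x * (a \<bullet> a) + 2 * z * (a \<bullet> b) + y * (b \<bullet> b)))"

definition vmax :: "real^'p \<Rightarrow> real" where
  "vmax v = Max (range (\<lambda>k. v $ k))"

definition vargmax :: "real^'p \<Rightarrow> 'p" where
  "vargmax v = (SOME k. \<forall>j. v $ j \<le> v $ k)"

definition std_normal_vec :: "(real^'p) measure" where
  "std_normal_vec = density lborel (\<lambda>v. \<Prod>k\<in>UNIV. std_normal_density (v $ k))"

end

theory Submission
  imports Defs
begin


definition Phi :: "'a::euclidean_space \<Rightarrow> real" where
  "Phi w = (\<Prod>b\<in>Basis. std_normal_density (w \<bullet> b))"

lemma Phi_nonneg: "0 \<le> Phi w"
  unfolding Phi_def by (intro prod_nonneg) auto

lemma Phi_measurable[measurable]: "Phi \<in> borel_measurable borel"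
  unfolding Phi_def by measurable

lemma nn_std: "(\<integral>\<^sup>+x. ennreal (std_normal_density x) \<partial>lborel) = 1"
  by (subst nn_integral_eq_integral) auto

lemma nn_integral_Phi: "(\<integral>\<^sup>+w. ennreal (Phi w) \<partial>(lborel::'a::euclidean_space measure)) = 1"
proof -
  have "(\<integral>\<^sup>+w. ennreal (Phi w) \<partial>(lborel::'a measure))
      = (\<integral>\<^sup>+w. (\<Prod>b\<in>Basis. ennreal (std_normal_density (w \<bullet> b))) \<partial>(lborel::'a measure))"
    unfolding Phi_def by (simp add: prod_ennreal)
  also have "\<dots> = (\<Prod>b\<in>(Basis::'a set). (\<integral>\<^sup>+x. ennreal (std_normal_density x) \<partial>lborel))"
    by (rule nn_integral_lborel_prod) auto
  also have "\<dots> = 1"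
    by (simp add: nn_std)
  finally show ?thesis .
qed

lemma integrable_Phi: "integrable (lborel::'a::euclidean_space measure) Phi"
  by (rule integrableI_nonneg) (auto simp: Phi_nonneg nn_integral_Phi)

lemma integral_Phi: "(\<integral>w. Phi w \<partial>(lborel::'a::euclidean_space measure)) = 1"
proof -
  have "ennreal (\<integral>w. Phi w \<partial>(lborel::'a measure)) = 1"
    using nn_integral_Phi[where 'a='a] nn_integral_eq_integral[OF integrable_Phi[where 'a='a]]
    by (simp add: Phi_nonneg)
  then show ?thesis by simp
qed

lemma char_std: "(\<integral>x. std_normal_density x *\<^sub>R iexp (t * x) \<partial>lborel) = complex_of_real (exp (- (t^2) / 2))"
proof -
  have "char std_normal_distribution t = complex_of_real (exp (- (t^2) / 2))"
    by (simp add: char_std_normal_distribution)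
  then show ?thesis
    unfolding char_def by (subst (asm) integral_density) auto
qed

lemma Phi_FT:
  fixes u :: "'a::euclidean_space"
  shows "(\<integral>w. Phi w *\<^sub>R iexp (u \<bullet> w) \<partial>lborel) = complex_of_real (exp (- (u \<bullet> u) / 2))"
proof -
  interpret P: product_sigma_finite "\<lambda>_::'a. lborel::real measure" ..
  let ?T = "\<lambda>f. \<Sum>b\<in>(Basis::'a set). f b *\<^sub>R b"
  have T_inner: "?T f \<bullet> b = f b" if "b \<in> Basis" for f b
    using that by (simp add: inner_sum_left inner_Basis if_distrib cong: if_cong)
  have "(\<integral>w. Phi w *\<^sub>R iexp (u \<bullet> w) \<partial>lborel)
      = (\<integral>f. Phi (?T f) *\<^sub>R iexp (u \<bullet> ?T f) \<partial>(\<Pi>\<^sub>M b\<in>(Basis::'a set). lborel))"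
    by (subst lborel_eq) (simp add: integral_distr)
  also have "\<dots> = (\<integral>f. (\<Prod>b\<in>(Basis::'a set). std_normal_density (f b) *\<^sub>R iexp ((u \<bullet> b) * f b))
                 \<partial>(\<Pi>\<^sub>M b\<in>(Basis::'a set). lborel))"
  proof (intro Bochner_Integration.integral_cong refl)
    fix f :: "'a \<Rightarrow> real"
    have "u \<bullet> ?T f = (\<Sum>b\<in>Basis. (u \<bullet> b) * f b)"
      by (simp add: inner_sum_right mult.commute)
    then have "iexp (u \<bullet> ?T f) = (\<Prod>b\<in>Basis. iexp ((u \<bullet> b) * f b))"
      by (simp add: sum_distrib_left exp_sum)
    moreover have "Phi (?T f) = (\<Prod>b\<in>Basis. std_normal_density (f b))"
      unfolding Phi_def by (intro prod.cong refl) (simp add: T_inner)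
    ultimately show "Phi (?T f) *\<^sub>R iexp (u \<bullet> ?T f) = (\<Prod>b\<in>Basis. std_normal_density (f b) *\<^sub>R iexp ((u \<bullet> b) * f b))"
      by (simp add: scaleR_conv_of_real prod.distrib of_real_prod)
  qed
  also have "\<dots> = (\<Prod>b\<in>(Basis::'a set). (\<integral>x. std_normal_density x *\<^sub>R iexp ((u \<bullet> b) * x) \<partial>lborel))"
  proof (rule P.product_integral_prod[where f="\<lambda>b x. std_normal_density x *\<^sub>R iexp ((u \<bullet> b) * x)"])
    show "finite (Basis::'a set)" by simp
    fix b :: 'a
    show "integrable lborel (\<lambda>x. std_normal_density x *\<^sub>R iexp ((u \<bullet> b) * x))"
      by (rule Bochner_Integration.integrable_bound[where f="std_normal_density"]) (auto simp: norm_mult)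
  qed
  also have "\<dots> = (\<Prod>b\<in>(Basis::'a set). complex_of_real (exp (- ((u \<bullet> b)^2) / 2)))"
    by (simp only: char_std)
  also have "\<dots> = complex_of_real (exp (- (u \<bullet> u) / 2))"
    by (simp add: of_real_prod[symmetric] exp_sum[symmetric] euclidean_inner[of u u] sum_divide_distrib[symmetric]
        sum_negf power2_eq_square)
  finally show ?thesis .
qed



definition chr :: "'a::euclidean_space measure \<Rightarrow> 'a \<Rightarrow> complex" where
  "chr \<mu> t = (\<integral>v. iexp (t \<bullet> v) \<partial>\<mu>)"

lemma Phi_exp: "Phi (x::'a::euclidean_space) = (1 / sqrt (2 * pi)) ^ DIM('a) * exp (- (x \<bullet> x) / 2)"
proof -
  have "Phi x = (\<Prod>b\<in>(Basis::'a set). (1/sqrt(2*pi)) * exp (- ((x \<bullet> b)^2) / 2))"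
    by (simp add: Phi_def std_normal_density_def)
  also have "\<dots> = (1/sqrt(2*pi))^DIM('a) * (\<Prod>b\<in>(Basis::'a set). exp (- ((x \<bullet> b)^2) / 2))"
    by (subst prod.distrib) simp
  also have "(\<Prod>b\<in>(Basis::'a set). exp (- ((x \<bullet> b)^2) / 2)) = exp (\<Sum>b\<in>(Basis::'a set). - ((x \<bullet> b)^2) / 2)"
    by (simp add: exp_sum)
  also have "(\<Sum>b\<in>(Basis::'a set). - ((x \<bullet> b)^2) / 2) = - (x \<bullet> x) / 2"
    by (simp add: euclidean_inner[of x x] sum_negf sum_divide_distrib power2_eq_square)
  finally show ?thesis .
qed

lemma Phi_FT':
  fixes x :: "'a::euclidean_space"
  shows "complex_of_real (Phi x) = complex_of_real ((1 / sqrt (2 * pi)) ^ DIM('a)) * (\<integral>w. Phi w *\<^sub>R iexp (x \<bullet> w) \<partial>lborel)"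
  unfolding Phi_FT by (subst Phi_exp) simp

lemma iexp_add: "iexp (a + b) = iexp a * iexp b"
  by (simp add: distrib_left exp_add)

lemma S2:
  fixes \<mu> :: "'a::euclidean_space measure"
  assumes fin: "finite_measure \<mu>" and sets: "sets \<mu> = sets borel" and s: "s > 0"
  shows "complex_of_real (\<integral>v. Phi ((1/s) *\<^sub>R (v - c)) \<partial>\<mu>)
    = complex_of_real ((1 / sqrt (2 * pi)) ^ DIM('a)) *
      (\<integral>w. Phi w *\<^sub>R (chr \<mu> ((1/s) *\<^sub>R w) * iexp (- (c \<bullet> w) / s)) \<partial>lborel)"
proof -
  interpret finite_measure \<mu> by (rule fin)
  interpret PS: pair_sigma_finite \<mu> "lborel :: 'a measure" ..
  have meas_eq[measurable_cong]: "sets \<mu> = sets borel" by (rule sets)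
  let ?C = "complex_of_real ((1 / sqrt (2 * pi)) ^ DIM('a))"
  let ?F = "\<lambda>v w. Phi w *\<^sub>R (iexp (((1/s) *\<^sub>R w) \<bullet> v) * iexp (- (c \<bullet> w) / s))"
  have inner_eq: "((1/s) *\<^sub>R (v - c)) \<bullet> w = ((1/s) *\<^sub>R w) \<bullet> v + (- (c \<bullet> w) / s)" for v w :: 'a
    by (simp add: inner_diff_right inner_commute[of w] inner_diff_left diff_divide_distrib)
  have pt: "complex_of_real (Phi ((1/s) *\<^sub>R (v - c))) = ?C * (\<integral>w. ?F v w \<partial>lborel)" for v
    by (simp only: Phi_FT' inner_eq iexp_add)
  have Fm[measurable]: "(\<lambda>p. ?F (fst p) (snd p)) \<in> borel_measurable (\<mu> \<Otimes>\<^sub>M lborel)"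
    by measurable
  have normF: "norm (?F v w) = Phi w" for v w
    by (simp add: norm_mult Phi_nonneg)
  have intF: "integrable (\<mu> \<Otimes>\<^sub>M lborel) (\<lambda>p. ?F (fst p) (snd p))"
  proof (rule PS.Fubini_integrable)
    show "integrable \<mu> (\<lambda>x. \<integral>y. norm (?F (fst (x, y)) (snd (x, y))) \<partial>lborel)"
      by (simp only: normF fst_conv snd_conv integral_Phi) simp
    show "AE x in \<mu>. integrable lborel (\<lambda>y. ?F (fst (x, y)) (snd (x, y)))"
    proof (rule AE_I2)
      fix x
      have "AE y in lborel. norm (?F x y) \<le> norm (Phi y)"
        by (intro AE_I2) (simp only: normF Phi_nonneg real_norm_def abs_of_nonneg order_refl)
      moreover have "(\<lambda>y. ?F x y) \<in> borel_measurable lborel" by measurable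
      ultimately have "integrable lborel (\<lambda>y. ?F x y)"
        by (intro Bochner_Integration.integrable_bound[OF integrable_Phi])
      then show "integrable lborel (\<lambda>y. ?F (fst (x, y)) (snd (x, y)))" by simp
    qed
  qed measurable
  have "complex_of_real (\<integral>v. Phi ((1/s) *\<^sub>R (v - c)) \<partial>\<mu>) = (\<integral>v. complex_of_real (Phi ((1/s) *\<^sub>R (v - c))) \<partial>\<mu>)"
    by simp
  also have "\<dots> = (\<integral>v. ?C * (\<integral>w. ?F v w \<partial>lborel) \<partial>\<mu>)"
    by (simp only: pt)
  also have "\<dots> = ?C * (\<integral>v. (\<integral>w. ?F v w \<partial>lborel) \<partial>\<mu>)"
    by simp
  also have "(\<integral>v. (\<integral>w. ?F v w \<partial>lborel) \<partial>\<mu>) = (\<integral>w. (\<integral>v. ?F v w \<partial>\<mu>) \<partial>lborel)"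
    using PS.Fubini_integral[of ?F] intF by (simp add: case_prod_beta')
  also have "\<dots> = (\<integral>w. Phi w *\<^sub>R (chr \<mu> ((1/s) *\<^sub>R w) * iexp (- (c \<bullet> w) / s)) \<partial>lborel)"
    unfolding chr_def by simp
  finally show ?thesis .
qed

lemma S2_eq:
  fixes \<mu> \<nu> :: "'a::euclidean_space measure"
  assumes "finite_measure \<mu>" "sets \<mu> = sets borel" "finite_measure \<nu>" "sets \<nu> = sets borel"
    and "chr \<mu> = chr \<nu>" and "s > 0"
  shows "(\<integral>v. Phi ((1/s) *\<^sub>R (v - c)) \<partial>\<mu>) = (\<integral>v. Phi ((1/s) *\<^sub>R (v - c)) \<partial>\<nu>)"
  using S2[OF assms(1,2) assms(6), of c] S2[OF assms(3,4) assms(6), of c] assms(5)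
  by (metis of_real_eq_iff)



lemma Phi_minus: "Phi (- x) = Phi (x::'a::euclidean_space)"
  by (simp add: Phi_exp)

lemma Phi_le1: "Phi (x::'a::euclidean_space) \<le> 1"
proof -
  have a: "(1 / sqrt (2 * pi)) ^ DIM('a) \<le> 1"
  proof (rule power_le_one)
    have "1 \<le> sqrt (2 * pi)" using pi_gt3 by (simp add: real_le_rsqrt)
    then show "1 / sqrt (2 * pi) \<le> 1" by simp
  qed simp
  have b: "exp (- (x \<bullet> x) / 2) \<le> 1" by simp
  show ?thesis unfolding Phi_exp
    by (rule mult_le_one[OF a _ b]) auto
qed

lemma change_var:
  fixes h :: "'a::euclidean_space \<Rightarrow> ennreal"
  assumes [measurable]: "h \<in> borel_measurable borel" and s: "s > 0"
  shows "(\<integral>\<^sup>+c. h c \<partial>lborel) = ennreal (s ^ DIM('a)) * (\<integral>\<^sup>+x. h (v + s *\<^sub>R x) \<partial>lborel)"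
proof -
  have "(\<integral>\<^sup>+c. h c \<partial>lborel) = (\<integral>\<^sup>+c. h c \<partial>density (distr lborel borel (\<lambda>x. v + s *\<^sub>R x)) (\<lambda>_. \<bar>s\<bar> ^ DIM('a)))"
    using lborel_affine[of s v] s by simp
  also have "\<dots> = (\<integral>\<^sup>+x. ennreal (s ^ DIM('a)) * h (v + s *\<^sub>R x) \<partial>lborel)"
    using s by (simp add: nn_integral_density nn_integral_distr)
  also have "\<dots> = ennreal (s ^ DIM('a)) * (\<integral>\<^sup>+x. h (v + s *\<^sub>R x) \<partial>lborel)"
    by (rule nn_integral_cmult) measurable
  finally show ?thesis .
qed

lemma S3_claim:
  fixes \<rho> :: "'a::euclidean_space measure" and g :: "'a \<Rightarrow> real"
  assumes fin: "finite_measure \<rho>" and sets: "sets \<rho> = sets borel" and s: "s > 0"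
    and gm[measurable]: "g \<in> borel_measurable borel" and g0: "\<And>v. 0 \<le> g v" and gB: "\<And>v. g v \<le> B"
  shows "ennreal (s ^ DIM('a)) * ennreal (\<integral>v. (\<integral>w. g (v + s *\<^sub>R w) * Phi w \<partial>lborel) \<partial>\<rho>)
       = (\<integral>\<^sup>+c. ennreal (g c) * ennreal (\<integral>v. Phi ((1/s) *\<^sub>R (v - c)) \<partial>\<rho>) \<partial>lborel)"
proof -
  interpret finite_measure \<rho> by (rule fin)
  interpret PS: pair_sigma_finite \<rho> "lborel :: 'a measure" ..
  have meas_eq[measurable_cong]: "sets \<rho> = sets borel" by (rule sets)
  define G where "G v = (\<integral>w. g (v + s *\<^sub>R w) * Phi w \<partial>lborel)" for v
  have intw: "integrable lborel (\<lambda>w. g (v + s *\<^sub>R w) * Phi w)" for v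
  proof (rule Bochner_Integration.integrable_bound[where f="\<lambda>w. B * Phi w"])
    show "integrable lborel (\<lambda>w. B * Phi w)" using integrable_Phi by blast
    show "AE w in lborel. norm (g (v + s *\<^sub>R w) * Phi w) \<le> norm (B * Phi w)"
      using g0 gB Phi_nonneg by (intro AE_I2) (auto simp: abs_mult intro!: mult_right_mono order_trans[OF gB abs_ge_self])
  qed measurable
  have G0: "0 \<le> G v" for v unfolding G_def using g0 Phi_nonneg by (intro integral_nonneg_AE AE_I2 mult_nonneg_nonneg) auto
  have GB: "G v \<le> B" for v
  proof -
    have "G v \<le> (\<integral>w. B * Phi w \<partial>(lborel::'a measure))"
      unfolding G_def
      by (rule Bochner_Integration.integral_mono[OF intw integrable_mult_right[OF integrable_Phi]]) (auto intro!: mult_right_mono g0 gB Phi_nonneg)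
    then show ?thesis by (simp add: integral_Phi)
  qed
  have Gm[measurable]: "G \<in> borel_measurable borel"
    unfolding G_def by measurable
  have intG: "integrable \<rho> G"
    by (rule integrable_const_bound[where B=B]) (use G0 GB in auto)
  have Gnn: "ennreal (G v) = (\<integral>\<^sup>+w. ennreal (g (v + s *\<^sub>R w) * Phi w) \<partial>lborel)" for v
    unfolding G_def using intw g0 Phi_nonneg by (subst nn_integral_eq_integral) (auto intro!: AE_I2 mult_nonneg_nonneg)
  have cv: "ennreal (s ^ DIM('a)) * ennreal (G v) = (\<integral>\<^sup>+c. ennreal (g c * Phi ((1/s) *\<^sub>R (v - c))) \<partial>lborel)" for v
  proof -
    have "(\<integral>\<^sup>+c. ennreal (g c * Phi ((1/s) *\<^sub>R (v - c))) \<partial>lborel)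
        = ennreal (s ^ DIM('a)) * (\<integral>\<^sup>+x. ennreal (g (v + s *\<^sub>R x) * Phi ((1/s) *\<^sub>R (v - (v + s *\<^sub>R x)))) \<partial>lborel)"
      by (rule change_var[OF _ s]) measurable
    also have "(\<lambda>x. Phi ((1/s) *\<^sub>R (v - (v + s *\<^sub>R x)))) = Phi"
      using s by (auto simp: Phi_minus)
    finally show ?thesis by (simp add: Gnn)
  qed
  have PhiInt: "integrable \<rho> (\<lambda>v. Phi ((1/s) *\<^sub>R (v - c)))" for c
    by (rule integrable_const_bound[where B=1]) (auto simp: Phi_nonneg Phi_le1)
  have "ennreal (s ^ DIM('a)) * ennreal (\<integral>v. G v \<partial>\<rho>) = ennreal (s ^ DIM('a)) * (\<integral>\<^sup>+v. ennreal (G v) \<partial>\<rho>)"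
    using intG G0 by (subst nn_integral_eq_integral) auto
  also have "\<dots> = (\<integral>\<^sup>+v. ennreal (s ^ DIM('a)) * ennreal (G v) \<partial>\<rho>)"
    by (rule nn_integral_cmult[symmetric]) measurable
  also have "\<dots> = (\<integral>\<^sup>+v. (\<integral>\<^sup>+c. ennreal (g c * Phi ((1/s) *\<^sub>R (v - c))) \<partial>lborel) \<partial>\<rho>)"
    by (simp only: cv)
  also have "\<dots> = (\<integral>\<^sup>+c. (\<integral>\<^sup>+v. ennreal (g c * Phi ((1/s) *\<^sub>R (v - c))) \<partial>\<rho>) \<partial>lborel)"
    by (rule PS.Fubini'[symmetric]) measurable
  also have "\<dots> = (\<integral>\<^sup>+c. ennreal (g c) * ennreal (\<integral>v. Phi ((1/s) *\<^sub>R (v - c)) \<partial>\<rho>) \<partial>lborel)"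
  proof (rule nn_integral_cong)
    fix c :: 'a
    have "(\<integral>\<^sup>+v. ennreal (g c * Phi ((1/s) *\<^sub>R (v - c))) \<partial>\<rho>) = (\<integral>\<^sup>+v. ennreal (g c) * ennreal (Phi ((1/s) *\<^sub>R (v - c))) \<partial>\<rho>)"
      by (intro nn_integral_cong) (simp add: ennreal_mult g0 Phi_nonneg)
    also have "\<dots> = ennreal (g c) * (\<integral>\<^sup>+v. ennreal (Phi ((1/s) *\<^sub>R (v - c))) \<partial>\<rho>)"
      by (rule nn_integral_cmult) measurable
    also have "(\<integral>\<^sup>+v. ennreal (Phi ((1/s) *\<^sub>R (v - c))) \<partial>\<rho>) = ennreal (\<integral>v. Phi ((1/s) *\<^sub>R (v - c)) \<partial>\<rho>)"
      using PhiInt by (subst nn_integral_eq_integral) (auto simp: Phi_nonneg)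
    finally show "(\<integral>\<^sup>+v. ennreal (g c * Phi ((1/s) *\<^sub>R (v - c))) \<partial>\<rho>) = ennreal (g c) * ennreal (\<integral>v. Phi ((1/s) *\<^sub>R (v - c)) \<partial>\<rho>)" .
  qed
  finally show ?thesis unfolding G_def .
qed



lemma GG_int:
  fixes g :: "'a::euclidean_space \<Rightarrow> real"
  assumes gm[measurable]: "g \<in> borel_measurable borel" and g0: "\<And>v. 0 \<le> g v" and gB: "\<And>v. g v \<le> B"
  shows "integrable lborel (\<lambda>w. g (v + s *\<^sub>R w) * Phi w)"
proof (rule Bochner_Integration.integrable_bound[where f="\<lambda>w. B * Phi w"])
  show "integrable lborel (\<lambda>w. B * Phi w)" using integrable_Phi by blast
  show "AE w in lborel. norm (g (v + s *\<^sub>R w) * Phi w) \<le> norm (B * Phi w)"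
    using g0 gB Phi_nonneg by (intro AE_I2) (auto simp: abs_mult intro!: mult_right_mono order_trans[OF gB abs_ge_self])
qed measurable

lemma GG_bounds:
  fixes g :: "'a::euclidean_space \<Rightarrow> real"
  assumes gm[measurable]: "g \<in> borel_measurable borel" and g0: "\<And>v. 0 \<le> g v" and gB: "\<And>v. g v \<le> B"
  shows "0 \<le> (\<integral>w. g (v + s *\<^sub>R w) * Phi w \<partial>lborel)" "(\<integral>w. g (v + s *\<^sub>R w) * Phi w \<partial>lborel) \<le> B"
proof -
  show "0 \<le> (\<integral>w. g (v + s *\<^sub>R w) * Phi w \<partial>lborel)"
    using g0 Phi_nonneg by (intro integral_nonneg_AE AE_I2 mult_nonneg_nonneg) auto
  have "(\<integral>w. g (v + s *\<^sub>R w) * Phi w \<partial>lborel) \<le> (\<integral>w. B * Phi w \<partial>(lborel::'a measure))"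
    by (rule Bochner_Integration.integral_mono[OF GG_int[OF gm g0 gB] integrable_mult_right[OF integrable_Phi]])
       (auto intro!: mult_right_mono g0 gB Phi_nonneg)
  then show "(\<integral>w. g (v + s *\<^sub>R w) * Phi w \<partial>lborel) \<le> B" by (simp add: integral_Phi)
qed

lemma GG_lim:
  fixes g :: "'a::euclidean_space \<Rightarrow> real"
  assumes gc: "continuous_on UNIV g" and g0: "\<And>v. 0 \<le> g v" and gB: "\<And>v. g v \<le> B"
  shows "(\<lambda>n. \<integral>w. g (v + inverse (real (Suc n)) *\<^sub>R w) * Phi w \<partial>lborel) \<longlonglongrightarrow> g v"
proof -
  have gm[measurable]: "g \<in> borel_measurable borel" by (rule borel_measurable_continuous_onI[OF gc])
  have "(\<lambda>n. \<integral>w. g (v + inverse (real (Suc n)) *\<^sub>R w) * Phi w \<partial>lborel) \<longlonglongrightarrow> (\<integral>w. g v * Phi w \<partial>(lborel::'a measure))"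
  proof (rule integral_dominated_convergence[where w="\<lambda>w. B * Phi w"])
    show "integrable lborel (\<lambda>w. B * Phi w)" using integrable_Phi by blast
    show "AE w in lborel. (\<lambda>n. g (v + inverse (real (Suc n)) *\<^sub>R w) * Phi w) \<longlonglongrightarrow> g v * Phi w"
    proof (rule AE_I2)
      fix w :: 'a
      have "(\<lambda>n. v + inverse (real (Suc n)) *\<^sub>R w) \<longlonglongrightarrow> v + 0 *\<^sub>R w"
        by (intro tendsto_intros LIMSEQ_inverse_real_of_nat)
      then have "(\<lambda>n. g (v + inverse (real (Suc n)) *\<^sub>R w)) \<longlonglongrightarrow> g v"
        using gc by (auto intro: isCont_tendsto_compose simp: continuous_on_eq_continuous_at)
      then show "(\<lambda>n. g (v + inverse (real (Suc n)) *\<^sub>R w) * Phi w) \<longlonglongrightarrow> g v * Phi w"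
        by (intro tendsto_intros)
    qed
    fix n
    show "AE w in lborel. norm (g (v + inverse (real (Suc n)) *\<^sub>R w) * Phi w) \<le> B * Phi w"
    proof (intro AE_I2)
      fix w :: 'a
      have "norm (g (v + inverse (real (Suc n)) *\<^sub>R w) * Phi w) = g (v + inverse (real (Suc n)) *\<^sub>R w) * Phi w"
        by (simp add: abs_mult abs_of_nonneg[OF g0] abs_of_nonneg[OF Phi_nonneg])
      also have "\<dots> \<le> B * Phi w" by (intro mult_right_mono gB Phi_nonneg)
      finally show "norm (g (v + inverse (real (Suc n)) *\<^sub>R w) * Phi w) \<le> B * Phi w" .
    qed
  qed measurable
  then show ?thesis by (simp add: integral_Phi)
qed

lemma S3_lim:
  fixes \<rho> :: "'a::euclidean_space measure" and g :: "'a \<Rightarrow> real"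
  assumes fin: "finite_measure \<rho>" and sets: "sets \<rho> = sets borel"
    and gc: "continuous_on UNIV g" and g0: "\<And>v. 0 \<le> g v" and gB: "\<And>v. g v \<le> B"
  shows "(\<lambda>n. \<integral>v. (\<integral>w. g (v + inverse (real (Suc n)) *\<^sub>R w) * Phi w \<partial>lborel) \<partial>\<rho>) \<longlonglongrightarrow> (\<integral>v. g v \<partial>\<rho>)"
proof -
  interpret finite_measure \<rho> by (rule fin)
  have meas_eq[measurable_cong]: "sets \<rho> = sets borel" by (rule sets)
  have gm[measurable]: "g \<in> borel_measurable borel" by (rule borel_measurable_continuous_onI[OF gc])
  show ?thesis
  proof (rule integral_dominated_convergence[where w="\<lambda>_. B"])
    show "AE v in \<rho>. (\<lambda>n. \<integral>w. g (v + inverse (real (Suc n)) *\<^sub>R w) * Phi w \<partial>lborel) \<longlonglongrightarrow> g v"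
      by (intro AE_I2 GG_lim[OF gc g0 gB])
    fix n
    show "AE v in \<rho>. norm (\<integral>w. g (v + inverse (real (Suc n)) *\<^sub>R w) * Phi w \<partial>lborel) \<le> B"
      using GG_bounds[OF gm g0 gB] by (intro AE_I2) auto
  qed auto
qed

lemma S3:
  fixes \<mu> \<nu> :: "'a::euclidean_space measure" and g :: "'a \<Rightarrow> real"
  assumes "finite_measure \<mu>" "sets \<mu> = sets borel" "finite_measure \<nu>" "sets \<nu> = sets borel"
    and ch: "chr \<mu> = chr \<nu>"
    and gc: "continuous_on UNIV g" and g0: "\<And>v. 0 \<le> g v" and gB: "\<And>v. g v \<le> B"
  shows "(\<integral>v. g v \<partial>\<mu>) = (\<integral>v. g v \<partial>\<nu>)"
proof -
  have gm[measurable]: "g \<in> borel_measurable borel" by (rule borel_measurable_continuous_onI[OF gc])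
  define GG where "GG s v = (\<integral>w. g (v + s *\<^sub>R w) * Phi w \<partial>lborel)" for s v
  have eq: "(\<integral>v. GG s v \<partial>\<mu>) = (\<integral>v. GG s v \<partial>\<nu>)" if s: "s > 0" for s
  proof -
    have "ennreal (s ^ DIM('a)) * ennreal (\<integral>v. GG s v \<partial>\<mu>) = ennreal (s ^ DIM('a)) * ennreal (\<integral>v. GG s v \<partial>\<nu>)"
      unfolding GG_def S3_claim[OF assms(1,2) s gm g0 gB] S3_claim[OF assms(3,4) s gm g0 gB]
      using S2_eq[OF assms(1-5) s] by simp
    moreover have "0 \<le> (\<integral>v. GG s v \<partial>\<mu>)" "0 \<le> (\<integral>v. GG s v \<partial>\<nu>)"
      unfolding GG_def using GG_bounds(1)[OF gm g0 gB] by (auto intro!: integral_nonneg_AE)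
    ultimately show ?thesis using s
      by (simp add: ennreal_mult[symmetric] ennreal_inj)
  qed
  have "(\<lambda>n. \<integral>v. GG (inverse (real (Suc n))) v \<partial>\<mu>) \<longlonglongrightarrow> (\<integral>v. g v \<partial>\<mu>)"
    unfolding GG_def by (rule S3_lim[OF assms(1,2) gc g0 gB])
  moreover have "(\<lambda>n. \<integral>v. GG (inverse (real (Suc n))) v \<partial>\<mu>) \<longlonglongrightarrow> (\<integral>v. g v \<partial>\<nu>)"
    unfolding eq[OF positive_imp_inverse_positive[OF of_nat_0_less_iff[THEN iffD2, OF zero_less_Suc]]]
    unfolding GG_def by (rule S3_lim[OF assms(3,4) gc g0 gB])
  ultimately show ?thesis by (rule LIMSEQ_unique)
qed



lemma closed_eq:
  fixes \<mu> \<nu> :: "'a::euclidean_space measure"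
  assumes fm: "finite_measure \<mu>" "sets \<mu> = sets borel" and fn: "finite_measure \<nu>" "sets \<nu> = sets borel"
    and ch: "chr \<mu> = chr \<nu>" and F: "closed F" "F \<noteq> {}"
  shows "measure \<mu> F = measure \<nu> F"
proof -
  define g where "g n v = max 0 (1 - real (Suc n) * infdist v F)" for n v
  have gc: "continuous_on UNIV (g n)" for n
    unfolding g_def by (intro continuous_intros)
  have g0: "0 \<le> g n v" for n v unfolding g_def by simp
  have g1: "g n v \<le> 1" for n v unfolding g_def using infdist_nonneg[of v F] by simp
  have lim: "(\<lambda>n. g n v) \<longlonglongrightarrow> indicator F v" for v
  proof (cases "v \<in> F")
    case True
    then have "infdist v F = 0" using in_closed_iff_infdist_zero[OF F] by simp
    then show ?thesis using True by (simp add: g_def)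
  next
    case False
    then have d: "infdist v F > 0" using in_closed_iff_infdist_zero[OF F] infdist_nonneg[of v F] by simp
    obtain N :: nat where N: "1 / infdist v F < real N" using reals_Archimedean2 by blast
    have "eventually (\<lambda>n. g n v = 0) sequentially"
    proof (rule eventually_sequentiallyI[of N])
      fix n assume "N \<le> n"
      then have "1 / infdist v F < real (Suc n)" using N by linarith
      then have "1 < real (Suc n) * infdist v F" using d by (simp add: field_simps)
      then show "g n v = 0" by (simp add: g_def)
    qed
    then have "(\<lambda>n. g n v) \<longlonglongrightarrow> 0" by (rule tendsto_eventually)
    then show ?thesis using False by simp
  qed
  have conv: "(\<lambda>n. \<integral>v. g n v \<partial>\<rho>) \<longlonglongrightarrow> measure \<rho> F"
    if fin: "finite_measure \<rho>" and sets: "sets \<rho> = sets borel" for \<rho> :: "'a measure"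
  proof -
    interpret finite_measure \<rho> by (rule fin)
    have meas_eq[measurable_cong]: "sets \<rho> = sets borel" by (rule sets)
    have gm[measurable]: "g n \<in> borel_measurable borel" for n by (rule borel_measurable_continuous_onI[OF gc])
    have Fm[measurable]: "F \<in> sets borel" using F(1) by simp
    have "(\<lambda>n. \<integral>v. g n v \<partial>\<rho>) \<longlonglongrightarrow> (\<integral>v. indicator F v \<partial>\<rho>)"
    proof (rule integral_dominated_convergence[where w="\<lambda>_. 1"])
      show "AE v in \<rho>. (\<lambda>n. g n v) \<longlonglongrightarrow> indicator F v" by (intro AE_I2 lim)
      fix n show "AE v in \<rho>. norm (g n v) \<le> 1" using g0 g1 by (intro AE_I2) (simp add: abs_of_nonneg)
    qed auto
    moreover have "(\<integral>v. indicator F v \<partial>\<rho>) = measure \<rho> F"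
      using sets by (simp add: integral_indicator)
    ultimately show ?thesis by simp
  qed
  have "\<And>n. (\<integral>v. g n v \<partial>\<mu>) = (\<integral>v. g n v \<partial>\<nu>)"
    by (rule S3[OF fm fn ch gc g0 g1])
  then have "(\<lambda>n. \<integral>v. g n v \<partial>\<mu>) \<longlonglongrightarrow> measure \<nu> F" using conv[OF fn] by simp
  then show ?thesis using conv[OF fm] LIMSEQ_unique by blast
qed

lemma CW:
  fixes \<mu> \<nu> :: "'a::euclidean_space measure"
  assumes fm: "finite_measure \<mu>" "sets \<mu> = sets borel" and fn: "finite_measure \<nu>" "sets \<nu> = sets borel"
    and ch: "chr \<mu> = chr \<nu>"
  shows "\<mu> = \<nu>"
proof (rule measure_eqI_generator_eq[where E="Collect closed" and \<Omega>=UNIV and A="\<lambda>_. UNIV"])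
  show "Int_stable (Collect closed :: 'a set set)" by (auto simp: Int_stable_def)
  show "Collect closed \<subseteq> Pow (UNIV :: 'a set)" by simp
  have "sets (borel :: 'a measure) = sigma_sets UNIV (Collect closed)"
    by (subst borel_eq_closed) (simp add: sets_measure_of)
  then show "sets \<mu> = sigma_sets UNIV (Collect closed)" "sets \<nu> = sigma_sets UNIV (Collect closed)"
    using fm(2) fn(2) by auto
  show "range (\<lambda>_. UNIV) \<subseteq> Collect closed" by auto
  show "(\<Union>i. UNIV) = (UNIV :: 'a set)" by simp
  show "emeasure \<mu> UNIV \<noteq> \<infinity>" for i :: nat
    using finite_measure.emeasure_finite[OF fm(1), of UNIV] by simp
  fix X :: "'a set" assume X: "X \<in> Collect closed"
  show "emeasure \<mu> X = emeasure \<nu> X"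
  proof (cases "X = {}")
    case True then show ?thesis by simp
  next
    case False
    have "X \<in> sets \<mu>" "X \<in> sets \<nu>" using X fm(2) fn(2) by auto
    then show ?thesis
      using closed_eq[OF fm fn ch, of X] X False
      by (simp add: finite_measure.emeasure_eq_measure[OF fm(1)] finite_measure.emeasure_eq_measure[OF fn(1)])
  qed
qed



lemma Basis_cart_real: "(Basis :: (real^'p) set) = range (\<lambda>i. axis i 1)"
  by (auto simp: Basis_vec_def)

lemma Phi_cart: "Phi (v::real^'p) = (\<Prod>k\<in>UNIV. std_normal_density (v $ k))"
proof -
  have inj: "inj (\<lambda>i::'p. axis i (1::real))" by (auto simp: inj_def axis_eq_axis)
  show ?thesis
    unfolding Phi_def Basis_cart_real prod.reindex[OF inj] by (simp add: inner_axis)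
qed

lemma std_normal_vec_eq: "std_normal_vec = density lborel (Phi :: real^'p \<Rightarrow> real)"
  unfolding std_normal_vec_def by (simp add: Phi_cart)

lemma prob_std_normal_vec: "prob_space (std_normal_vec :: (real^'p) measure)"
  by (rule prob_spaceI) (simp add: std_normal_vec_eq emeasure_density nn_integral_Phi)

lemma char_normal_law:
  assumes "0 \<le> v"
  shows "(\<integral>u. iexp u \<partial>normal_law 0 v) = complex_of_real (exp (- v / 2))"
proof (cases "v = 0")
  case True
  then show ?thesis by (simp add: normal_law_def integral_return)
next
  case False
  with assms have v: "v > 0" by simp
  define \<sigma> where "\<sigma> = sqrt v"
  have s: "\<sigma> > 0" using v by (simp add: \<sigma>_def)
  have nd: "\<bar>\<sigma>\<bar> * normal_density 0 \<sigma> (0 + \<sigma> * y) = std_normal_density y" for y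
    using s by (simp add: normal_density_def real_sqrt_mult power2_eq_square field_simps)
  have "(\<integral>u. iexp u \<partial>normal_law 0 v) = (\<integral>u. normal_density 0 \<sigma> u *\<^sub>R iexp u \<partial>lborel)"
    using v by (simp add: normal_law_def \<sigma>_def integral_density)
  also have "\<dots> = \<bar>\<sigma>\<bar> *\<^sub>R (\<integral>y. normal_density 0 \<sigma> (0 + \<sigma> * y) *\<^sub>R iexp (0 + \<sigma> * y) \<partial>lborel)"
    by (rule lborel_integral_real_affine) (use s in simp)
  also have "\<dots> = (\<integral>y. std_normal_density y *\<^sub>R iexp (\<sigma> * y) \<partial>lborel)"
    unfolding integral_scaleR_right[symmetric] scaleR_scaleR nd by simp
  also have "\<dots> = complex_of_real (exp (- (\<sigma>^2) / 2))" by (rule char_std)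
  finally show ?thesis using v by (simp add: \<sigma>_def)
qed

lemma chr_distr:
  fixes V :: "'s \<Rightarrow> 'a::euclidean_space"
  assumes [measurable]: "V \<in> borel_measurable M"
  shows "chr (distr M borel V) t = (\<integral>u. iexp u \<partial>distr M borel (\<lambda>\<omega>. t \<bullet> V \<omega>))"
  unfolding chr_def by (simp add: integral_distr)

lemma chr_std_scaled:
  "chr (distr std_normal_vec borel (\<lambda>v::real^'p. r *\<^sub>R v)) t = complex_of_real (exp (- (r^2 * (t \<bullet> t)) / 2))"
proof -
  have "chr (distr std_normal_vec borel (\<lambda>v::real^'p. r *\<^sub>R v)) t = (\<integral>v. iexp (t \<bullet> (r *\<^sub>R v)) \<partial>(std_normal_vec::(real^'p) measure))"
    unfolding chr_def by (subst integral_distr) (auto simp: std_normal_vec_eq)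
  also have "\<dots> = (\<integral>v. Phi v *\<^sub>R iexp ((r *\<^sub>R t) \<bullet> v) \<partial>(lborel::(real^'p) measure))"
    unfolding std_normal_vec_eq by (subst integral_density) (auto simp: Phi_nonneg)
  also have "\<dots> = complex_of_real (exp (- ((r *\<^sub>R t) \<bullet> (r *\<^sub>R t)) / 2))" by (rule Phi_FT)
  finally show ?thesis by (simp add: power2_eq_square)
qed

lemma gauss_vec:
  fixes V :: "'s \<Rightarrow> real^'p" and c :: real
  assumes P: "prob_space M" and Vm[measurable]: "V \<in> borel_measurable M" and c: "c > 0"
    and law: "\<And>a. distr M borel (\<lambda>\<omega>. a \<bullet> V \<omega>) = normal_law 0 (c * (a \<bullet> a))"
  shows "distr M borel V = distr std_normal_vec borel (\<lambda>v. sqrt c *\<^sub>R v)"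
proof (rule CW)
  show "finite_measure (distr M borel V)"
    using prob_space.prob_space_distr[OF P Vm] unfolding prob_space_def by blast
  show "finite_measure (distr std_normal_vec borel (\<lambda>v::real^'p. sqrt c *\<^sub>R v))"
    using prob_space.prob_space_distr[OF prob_std_normal_vec, of "\<lambda>v::real^'p. sqrt c *\<^sub>R v" borel]
    unfolding prob_space_def by (auto simp: std_normal_vec_eq)
  show "sets (distr M borel V) = sets borel" by simp
  show "sets (distr std_normal_vec borel (\<lambda>v::real^'p. sqrt c *\<^sub>R v)) = sets borel" by simp
  show "chr (distr M borel V) = chr (distr std_normal_vec borel (\<lambda>v. sqrt c *\<^sub>R v))"
  proof
    fix t :: "real^'p"
    have "chr (distr M borel V) t = complex_of_real (exp (- (c * (t \<bullet> t)) / 2))"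
      unfolding chr_distr[OF Vm] law using c by (intro char_normal_law) simp
    then show "chr (distr M borel V) t = chr (distr std_normal_vec borel (\<lambda>v. sqrt c *\<^sub>R v)) t"
      unfolding chr_std_scaled using c by simp
  qed
qed



lemma vmax_ge: "v $ j \<le> vmax v"
  unfolding vmax_def by (rule Max_ge) auto

lemma vmax_in: "\<exists>k. v $ k = vmax v"
proof -
  have "vmax v \<in> range (\<lambda>k. v $ k)" unfolding vmax_def by (rule Max_in) auto
  then show ?thesis by auto
qed

lemma vargmax_spec: "v $ j \<le> v $ vargmax v"
proof -
  have "\<exists>k. \<forall>j. v $ j \<le> v $ k" using vmax_in[of v] vmax_ge[of v] by metis
  then have "\<forall>j. v $ j \<le> v $ vargmax v" unfolding vargmax_def by (rule someI_ex)
  then show ?thesis by blast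
qed

lemma vargmax_eq: "v $ vargmax v = vmax v"
proof (rule antisym)
  show "v $ vargmax v \<le> vmax v" by (rule vmax_ge)
  obtain k where "v $ k = vmax v" using vmax_in by blast
  then show "vmax v \<le> v $ vargmax v" using vargmax_spec[of v k] by simp
qed

lemma vmax_scale: "0 \<le> r \<Longrightarrow> vmax (r *\<^sub>R v) = r * vmax v"
  unfolding vmax_def[of "r *\<^sub>R v"]
proof (rule Max_eqI)
  assume r: "0 \<le> r"
  show "finite (range (\<lambda>k. (r *\<^sub>R v) $ k))" by simp
  show "y \<le> r * vmax v" if "y \<in> range (\<lambda>k. (r *\<^sub>R v) $ k)" for y
    using that r vmax_ge[of v] by (auto intro: mult_left_mono)
  show "r * vmax v \<in> range (\<lambda>k. (r *\<^sub>R v) $ k)"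
  proof -
    have e: "(r *\<^sub>R v) $ vargmax v = r * vmax v" by (simp add: vargmax_eq)
    show ?thesis unfolding e[symmetric] by (rule rangeI)
  qed
qed

lemma vmax_meas[measurable]: "vmax \<in> borel_measurable borel"
  unfolding vmax_def by measurable

lemma vargmax_meas[measurable]: "vargmax \<in> borel \<rightarrow>\<^sub>M count_space UNIV"
proof -
  define A where "A k = {v::real^'a. \<forall>j. v $ j \<le> v $ k}" for k
  define S where "S v = {k. v \<in> A k}" for v :: "real^'a"
  have eq: "vargmax = (\<lambda>T. SOME k. k \<in> T) \<circ> S"
    by (auto simp: vargmax_def S_def A_def fun_eq_iff)
  have Ab: "A k \<in> sets borel" for k
  proof -
    have cl: "closed {v::real^'a. v $ j \<le> v $ k}" for j
      by (intro closed_Collect_le continuous_on_component continuous_on_id)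
    have "closed (\<Inter>j. {v::real^'a. v $ j \<le> v $ k})" by (intro closed_INT ballI cl)
    moreover have "A k = (\<Inter>j. {v. v $ j \<le> v $ k})" unfolding A_def by blast
    ultimately show ?thesis by simp
  qed
  have "S \<in> borel \<rightarrow>\<^sub>M count_space UNIV"
    unfolding measurable_count_space_eq2_countable
  proof (intro conjI ballI)
    fix T :: "'a set"
    have "S -` {T} \<inter> space borel = (\<Inter>k\<in>T. A k) \<inter> (\<Inter>k\<in>-T. UNIV - A k)"
      unfolding S_def by auto
    also have "\<dots> \<in> sets borel"
    proof (rule sets.Int)
      show "(\<Inter>k\<in>T. A k) \<in> sets borel"
        by (rule sets.countable_INT'') (auto simp: Ab)
      show "(\<Inter>k\<in>-T. UNIV - A k) \<in> sets borel"
        by (rule sets.countable_INT'') (auto simp: Ab)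
    qed
    finally show "S -` {T} \<inter> space borel \<in> sets borel" .
  qed auto
  then show ?thesis unfolding eq by (rule measurable_comp) simp
qed

lemma argsel_meas[measurable]: "(\<lambda>p::(real^'a) \<times> (real^'a). snd p $ vargmax (fst p)) \<in> borel_measurable borel"
proof (rule measurable_compose_countable[where g="\<lambda>p. vargmax (fst p)"])
  fix i :: 'a
  show "(\<lambda>p::(real^'a) \<times> (real^'a). snd p $ i) \<in> borel_measurable borel"
    by (intro borel_measurable_continuous_onI continuous_intros)
  have "(fst :: (real^'a) \<times> (real^'a) \<Rightarrow> real^'a) \<in> borel \<rightarrow>\<^sub>M borel"
    by (intro borel_measurable_continuous_onI continuous_intros)
  then show "(\<lambda>p::(real^'a) \<times> (real^'a). vargmax (fst p)) \<in> borel \<rightarrow>\<^sub>M count_space UNIV"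
    using measurable_comp[OF _ vargmax_meas] by (simp add: comp_def)
qed



lemma normal_integrable:
  fixes W :: "'s \<Rightarrow> real"
  assumes Wm[measurable]: "W \<in> borel_measurable M" and law: "distr M borel W = normal_law 0 v" and v: "v > 0"
  shows "integrable M W"
proof -
  have "integrable (distr M borel W) (\<lambda>u. u)"
    unfolding law normal_law_def using v
    by (simp add: integrable_density integrable_normal_moment_nz_1)
  then show ?thesis by (subst (asm) integrable_distr_eq) auto
qed

lemma abs_sel_le: "\<bar>(v::real^'p) $ k\<bar> \<le> (\<Sum>j\<in>UNIV. \<bar>v $ j\<bar>)"
  by (rule member_le_sum) auto

lemma norm_sel_le: "norm ((v::real^'p) $ k) \<le> norm (\<Sum>j\<in>UNIV. \<bar>v $ j\<bar>)"
proof -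
  have "0 \<le> (\<Sum>j\<in>UNIV. \<bar>v $ j\<bar>)" by (intro sum_nonneg) auto
  then show ?thesis using abs_sel_le[of v k] by simp
qed

lemma norm_vmax_le: "norm (vmax (v::real^'p)) \<le> norm (\<Sum>j\<in>UNIV. \<bar>v $ j\<bar>)"
  using norm_sel_le[of v "vargmax v"] by (simp only: vargmax_eq)

lemma comp_meas[measurable (raw)]:
  fixes X :: "'s \<Rightarrow> real^'p"
  assumes "X \<in> borel_measurable M"
  shows "(\<lambda>\<omega>. X \<omega> $ k) \<in> borel_measurable M"
proof -
  have "(\<lambda>v::real^'p. v $ k) \<in> borel_measurable borel"
    by (intro borel_measurable_continuous_onI continuous_intros)
  from measurable_comp[OF assms this] show ?thesis by (simp add: comp_def)
qed

lemma pair_meas: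
  fixes X Y :: "'s \<Rightarrow> real^'p"
  assumes "X \<in> borel_measurable M" "Y \<in> borel_measurable M"
  shows "(\<lambda>\<omega>. (X \<omega>, Y \<omega>)) \<in> borel_measurable M"
proof -
  have "(\<lambda>\<omega>. (X \<omega>, Y \<omega>)) \<in> M \<rightarrow>\<^sub>M borel \<Otimes>\<^sub>M borel" using assms by measurable
  then show ?thesis by (simp add: borel_prod)
qed

theorem mainTheorem3:
  fixes M :: "'s measure" and X Y :: "'s \<Rightarrow> real^'p" and x y z :: real
  assumes "prob_space M"
    and "x > 0" and "y > 0"
    and "jointly_normal_cov M X Y x y z"
  shows "(\<integral>\<omega>. Y \<omega> $ vargmax (X \<omega>) \<partial>M) = z / x * (\<integral>\<omega>. vmax (X \<omega>) \<partial>M)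
       \<and> z / x * (\<integral>\<omega>. vmax (X \<omega>) \<partial>M) = z / sqrt x * (\<integral>v. vmax v \<partial>(std_normal_vec :: (real^'p) measure))
       \<and> z / sqrt x * (\<integral>v. vmax v \<partial>(std_normal_vec :: (real^'p) measure))
           = z / sqrt (x * y) * (\<integral>\<omega>. vmax (Y \<omega>) \<partial>M)"
proof -
  interpret P: prob_space M by fact
  have Xm[measurable]: "X \<in> borel_measurable M" and Ym[measurable]: "Y \<in> borel_measurable M"
    and law: "\<And>a b. distr M borel (\<lambda>\<omega>. a \<bullet> X \<omega> + b \<bullet> Y \<omega>) = normal_law 0 (x * (a \<bullet> a) + 2 * z * (a \<bullet> b) + y * (b \<bullet> b))"
    using assms(4) unfolding jointly_normal_cov_def by auto
  have lawX: "distr M borel (\<lambda>\<omega>. a \<bullet> X \<omega>) = normal_law 0 (x * (a \<bullet> a))" for a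
    using law[of a 0] by simp
  have lawY: "distr M borel (\<lambda>\<omega>. b \<bullet> Y \<omega>) = normal_law 0 (y * (b \<bullet> b))" for b
    using law[of 0 b] by simp
  define S where "S = (\<integral>v. vmax v \<partial>(std_normal_vec :: (real^'p) measure))"
  have Evmax: "(\<integral>\<omega>. vmax (V \<omega>) \<partial>M) = sqrt c * S"
    if Vm[measurable]: "V \<in> borel_measurable M" and c: "c > 0"
      and lawV: "\<And>a. distr M borel (\<lambda>\<omega>. a \<bullet> V \<omega>) = normal_law 0 (c * (a \<bullet> a))" for V :: "'s \<Rightarrow> real^'p" and c
  proof -
    have "(\<integral>\<omega>. vmax (V \<omega>) \<partial>M) = (\<integral>v. vmax v \<partial>distr M borel V)" by (simp add: integral_distr)
    also have "\<dots> = (\<integral>v. vmax v \<partial>distr (std_normal_vec :: (real^'p) measure) borel (\<lambda>v. sqrt c *\<^sub>R v))"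
      by (simp only: gauss_vec[OF assms(1) Vm c lawV])
    also have "\<dots> = (\<integral>v. vmax (sqrt c *\<^sub>R v) \<partial>(std_normal_vec :: (real^'p) measure))"
      by (subst integral_distr) (auto simp: std_normal_vec_eq)
    also have "\<dots> = sqrt c * S" using c by (simp add: vmax_scale S_def)
    finally show ?thesis .
  qed
  have EX: "(\<integral>\<omega>. vmax (X \<omega>) \<partial>M) = sqrt x * S" by (rule Evmax[OF Xm assms(2) lawX])
  have EY: "(\<integral>\<omega>. vmax (Y \<omega>) \<partial>M) = sqrt y * S" by (rule Evmax[OF Ym assms(3) lawY])
  define c where "c = z / x"
  have coordX: "integrable M (\<lambda>\<omega>. X \<omega> $ k)" for k
  proof (rule normal_integrable[OF _ _ assms(2)])
    show "distr M borel (\<lambda>\<omega>. X \<omega> $ k) = normal_law 0 x"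
      using lawX[of "axis k 1"] by (simp add: inner_axis' inner_axis_axis)
  qed measurable
  have coordY: "integrable M (\<lambda>\<omega>. Y \<omega> $ k)" for k
  proof (rule normal_integrable[OF _ _ assms(3)])
    show "distr M borel (\<lambda>\<omega>. Y \<omega> $ k) = normal_law 0 y"
      using lawY[of "axis k 1"] by (simp add: inner_axis' inner_axis_axis)
  qed measurable
  have sumX: "integrable M (\<lambda>\<omega>. \<Sum>j\<in>UNIV. \<bar>X \<omega> $ j\<bar>)" by (intro Bochner_Integration.integrable_sum Bochner_Integration.integrable_abs coordX)
  have sumY: "integrable M (\<lambda>\<omega>. \<Sum>j\<in>UNIV. \<bar>Y \<omega> $ j\<bar>)" by (intro Bochner_Integration.integrable_sum Bochner_Integration.integrable_abs coordY)
  have pXY[measurable]: "(\<lambda>\<omega>. (X \<omega>, Y \<omega>)) \<in> borel_measurable M" by (rule pair_meas[OF Xm Ym])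
  have argm[measurable]: "(\<lambda>\<omega>. Y \<omega> $ vargmax (X \<omega>)) \<in> borel_measurable M"
    using measurable_comp[OF pXY argsel_meas] by (simp add: comp_def)
  have intVX: "integrable M (\<lambda>\<omega>. vmax (X \<omega>))"
  proof (rule Bochner_Integration.integrable_bound[OF sumX])
    show "AE \<omega> in M. norm (vmax (X \<omega>)) \<le> norm (\<Sum>j\<in>UNIV. \<bar>X \<omega> $ j\<bar>)"
      by (intro AE_I2 norm_vmax_le)
  qed measurable
  have intA: "integrable M (\<lambda>\<omega>. Y \<omega> $ vargmax (X \<omega>))"
  proof (rule Bochner_Integration.integrable_bound[OF sumY])
    show "AE \<omega> in M. norm (Y \<omega> $ vargmax (X \<omega>)) \<le> norm (\<Sum>j\<in>UNIV. \<bar>Y \<omega> $ j\<bar>)"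
      by (intro AE_I2 norm_sel_le)
  qed measurable
  have pXY2[measurable]: "(\<lambda>\<omega>. (X \<omega>, (2*c) *\<^sub>R X \<omega> - Y \<omega>)) \<in> borel_measurable M"
    by (rule pair_meas) measurable
  have CWeq: "distr M borel (\<lambda>\<omega>. (X \<omega>, Y \<omega>)) = distr M borel (\<lambda>\<omega>. (X \<omega>, (2*c) *\<^sub>R X \<omega> - Y \<omega>))"
  proof (rule CW)
    show "finite_measure (distr M borel (\<lambda>\<omega>. (X \<omega>, Y \<omega>)))"
      using P.prob_space_distr[OF pXY] unfolding prob_space_def by blast
    show "finite_measure (distr M borel (\<lambda>\<omega>. (X \<omega>, (2*c) *\<^sub>R X \<omega> - Y \<omega>)))"
      using P.prob_space_distr[OF pXY2] unfolding prob_space_def by blast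
    show "chr (distr M borel (\<lambda>\<omega>. (X \<omega>, Y \<omega>))) = chr (distr M borel (\<lambda>\<omega>. (X \<omega>, (2*c) *\<^sub>R X \<omega> - Y \<omega>)))"
    proof
      fix t :: "(real^'p) \<times> (real^'p)"
      obtain a b where t: "t = (a, b)" by (cases t)
      have e1: "(\<lambda>\<omega>. t \<bullet> (X \<omega>, Y \<omega>)) = (\<lambda>\<omega>. a \<bullet> X \<omega> + b \<bullet> Y \<omega>)" by (simp add: t)
      have e2: "(\<lambda>\<omega>. t \<bullet> (X \<omega>, (2*c) *\<^sub>R X \<omega> - Y \<omega>)) = (\<lambda>\<omega>. (a + (2*c) *\<^sub>R b) \<bullet> X \<omega> + (-b) \<bullet> Y \<omega>)"
        by (auto simp: t inner_add_left inner_diff_right inner_commute[of b] fun_eq_iff)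
      have q: "x * ((a + (2*c) *\<^sub>R b) \<bullet> (a + (2*c) *\<^sub>R b)) + 2 * z * ((a + (2*c) *\<^sub>R b) \<bullet> (-b)) + y * ((-b) \<bullet> (-b))
          = x * (a \<bullet> a) + 2 * z * (a \<bullet> b) + y * (b \<bullet> b)"
        using assms(2) by (simp add: c_def inner_add_left inner_add_right inner_commute[of b a] field_simps)
      show "chr (distr M borel (\<lambda>\<omega>. (X \<omega>, Y \<omega>))) t = chr (distr M borel (\<lambda>\<omega>. (X \<omega>, (2*c) *\<^sub>R X \<omega> - Y \<omega>))) t"
        unfolding chr_distr[OF pXY] chr_distr[OF pXY2] e1 e2 law q ..
    qed
  qed simp_all
  let ?I = "(\<integral>\<omega>. Y \<omega> $ vargmax (X \<omega>) \<partial>M)"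
  let ?E = "(\<integral>\<omega>. vmax (X \<omega>) \<partial>M)"
  have "?I = (\<integral>p. snd p $ vargmax (fst p) \<partial>distr M borel (\<lambda>\<omega>. (X \<omega>, Y \<omega>)))"
    by (simp add: integral_distr[OF pXY argsel_meas])
  also have "\<dots> = (\<integral>p. snd p $ vargmax (fst p) \<partial>distr M borel (\<lambda>\<omega>. (X \<omega>, (2*c) *\<^sub>R X \<omega> - Y \<omega>)))"
    by (simp only: CWeq)
  also have "\<dots> = (\<integral>\<omega>. ((2*c) *\<^sub>R X \<omega> - Y \<omega>) $ vargmax (X \<omega>) \<partial>M)"
    by (simp add: integral_distr[OF pXY2 argsel_meas])
  also have "\<dots> = (\<integral>\<omega>. 2*c * vmax (X \<omega>) - Y \<omega> $ vargmax (X \<omega>) \<partial>M)"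
    by (simp add: vargmax_eq)
  also have "\<dots> = 2*c * ?E - ?I"
    using intVX intA by simp
  finally have I: "?I = c * ?E" by simp
  have sx: "sqrt x > 0" using assms(2) by simp
  have sy: "sqrt y > 0" using assms(3) by simp
  have xx: "x = sqrt x * sqrt x" using assms(2) by simp
  define s where "s = sqrt x"
  define t where "t = sqrt y"
  have s0: "s > 0" and t0: "t > 0" using sx sy by (simp_all add: s_def t_def)
  have xs: "x = s * s" and yt: "y = t * t" using assms(2,3) by (simp_all add: s_def t_def)
  have sxy: "sqrt (x * y) = s * t" by (simp add: s_def t_def real_sqrt_mult)
  show ?thesis
    unfolding I EX EY S_def[symmetric] c_def sxy s_def[symmetric] t_def[symmetric]
    unfolding xs using s0 t0 by (simp add: field_simps)
qed


end
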